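(* Let $a,b,c$ be positive integers such that $abc$ is not a cube in $\mathbb{Z}$. Then there exists $\lambda\in\{a/b,\,b/c,\,c/a\}$ such that $\mathbb{Q}(\sqrt[3]{abc})\neq\mathbb{Q}(\sqrt[3]{\lambda})$.
   Context: $\sqrt[3]{\cdot}$ denotes the real cube root, so these are subfields of $\mathbb{R}$. *)

theory Defs
  imports Complex_Main
begin

definition real_subfield :: "real set \<Rightarrow> bool" where
  "real_subfield K \<longleftrightarrow> 0 \<in> K \<and> 1 \<in> K \<and>
     (\<forall>x\<in>K. \<forall>y\<in>K. x + y \<in> K \<and> x - y \<in> K \<and> x * y \<in> K) \<and>
     (\<forall>x\<in>K. x \<noteq> 0 \<longrightarrow> inverse x \<in> K)"

definition Q_adjoin :: "real \<Rightarrow> real set" where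
  "Q_adjoin \<alpha> = \<Inter>{K. real_subfield K \<and> \<alpha> \<in> K}"

end

theory Submission
  imports Defs
begin

definition cub :: "real \<Rightarrow> bool" where "cub r \<longleftrightarrow> (\<exists>q\<in>\<rat>. r = q ^ 3)"

lemma cub_mult: "cub r \<Longrightarrow> cub s \<Longrightarrow> cub (r * s)"
  unfolding cub_def by (metis Rats_mult power_mult_distrib)

lemma cub_div: "cub r \<Longrightarrow> cub s \<Longrightarrow> cub (r / s)"
  unfolding cub_def by (metis Rats_divide power_divide)

lemma cub_pow3: "q \<in> \<rat> \<Longrightarrow> cub (q ^ 3)"
  unfolding cub_def by blast

lemma rat_cube_int:
  assumes "cub (real_of_int n)" shows "\<exists>m::int. n = m ^ 3"
proof -
  obtain r where r: "r \<in> \<rat>" "real_of_int n = r ^ 3" using assms unfolding cub_def by blast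
  obtain p q where pq: "q > 0" "coprime p q" "r = of_int p / of_int q" using Rats_cases'[OF r(1)] by blast
  have "real_of_int n * real_of_int q ^ 3 = real_of_int p ^ 3"
    using r(2) pq by (simp add: power_divide)
  hence e: "n * q ^ 3 = p ^ 3" by (metis of_int_eq_iff of_int_mult of_int_power)
  hence "q ^ 3 dvd p ^ 3" by (metis dvd_triv_right)
  moreover have "coprime (p ^ 3) (q ^ 3)" using pq(2) by simp
  ultimately have "is_unit (q ^ 3)"
    by (metis coprime_absorb_left coprime_commute)
  hence "is_unit q" using is_unit_power_iff[of q 3] by simp
  hence "q = 1" using pq(1) by auto
  thus ?thesis using e by auto
qed

lemma irr_t:
  assumes "t ^ 3 = N" "\<not> cub N" shows "t \<notin> \<rat>"
  using assms cub_pow3 by blast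

lemma lin_indep:
  assumes t3: "t ^ 3 = N" and nc: "\<not> cub N" and x: "x \<in> \<rat>" and y: "y \<in> \<rat>" and z: "z \<in> \<rat>"
    and N: "N \<in> \<rat>"
    and e: "x + y * t + z * t ^ 2 = 0"
  shows "x = 0 \<and> y = 0 \<and> z = 0"
proof -
  have tq: "t \<notin> \<rat>" using irr_t t3 nc by blast
  show ?thesis
  proof (cases "z = 0")
    case True
    then have e2: "x + y * t = 0" using e by simp
    show ?thesis
    proof (cases "y = 0")
      case True then show ?thesis using e2 \<open>z = 0\<close> by simp
    next
      case False
      then have "t = - x / y" using e2 by (simp add: field_simps)
      then have "t \<in> \<rat>" using x y by simp
      then show ?thesis using tq by blast
    qed
  next
    case False
    have k: "z * ((y^2 - x*z) * t - (N * z^2 - x*y)) = 0" using e t3 by algebra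
    hence k2: "(y^2 - x*z) * t = N * z^2 - x*y" using False by simp
    show ?thesis
    proof (cases "y^2 - x*z = 0")
      case False
      then have "t = (N * z^2 - x*y) / (y^2 - x*z)" using k2 by (simp add: field_simps)
      then have "t \<in> \<rat>" using x y z N by simp
      then show ?thesis using tq by blast
    next
      case True
      have "N * z^3 = y^3" using True k2
        by algebra
      hence "N = (y/z)^3" using \<open>z \<noteq> 0\<close> by (simp add: field_simps)
      hence "cub N" using y z cub_pow3 by simp
      then show ?thesis using nc by blast
    qed
  qed
qed

definition Sth :: "real \<Rightarrow> real set" where
  "Sth t = {x + y * t + z * t^2 | x y z. x \<in> \<rat> \<and> y \<in> \<rat> \<and> z \<in> \<rat>}"

lemma Sth_I: "x \<in> \<rat> \<Longrightarrow> y \<in> \<rat> \<Longrightarrow> z \<in> \<rat> \<Longrightarrow> x + y * t + z * t^2 \<in> Sth t"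
  unfolding Sth_def by blast

lemma Sth_sub:
  assumes t3: "t ^ 3 = N" and nc: "\<not> cub N" and N: "N \<in> \<rat>"
  shows "real_subfield (Sth t)"
proof -
  have tq: "t \<notin> \<rat>" using irr_t t3 nc by blast
  have z: "0 \<in> Sth t" unfolding Sth_def by (rule CollectI, rule exI[of _ 0], rule exI[of _ 0], rule exI[of _ 0]) simp
  have o: "1 \<in> Sth t" unfolding Sth_def by (rule CollectI, rule exI[of _ 1], rule exI[of _ 0], rule exI[of _ 0]) simp
  have ops: "u + v \<in> Sth t \<and> u - v \<in> Sth t \<and> u * v \<in> Sth t" if hu: "u \<in> Sth t" and hv: "v \<in> Sth t" for u v
  proof -
    obtain x y z where u: "u = x + y * t + z * t^2" "x \<in> \<rat>" "y \<in> \<rat>" "z \<in> \<rat>"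
      using hu unfolding Sth_def by blast
    obtain x' y' z' where v: "v = x' + y' * t + z' * t^2" "x' \<in> \<rat>" "y' \<in> \<rat>" "z' \<in> \<rat>"
      using hv unfolding Sth_def by blast
    have e1: "u + v = (x + x') + (y + y') * t + (z + z') * t^2" using u v by (simp add: algebra_simps)
    have e2: "u - v = (x - x') + (y - y') * t + (z - z') * t^2" using u v by (simp add: algebra_simps)
    have e3: "u * v = (x*x' + N*(y*z' + z*y')) + (x*y' + y*x' + N*z*z') * t + (x*z' + y*y' + z*x') * t^2"
      using u v t3 by algebra
    show ?thesis unfolding e1 e2 e3 by (intro conjI Sth_I) (use u v N in simp_all)
  qed
  have inv: "inverse u \<in> Sth t" if hu: "u \<in> Sth t" and hn: "u \<noteq> 0" for u
  proof -
    obtain x y z where u: "u = x + y * t + z * t^2" "x \<in> \<rat>" "y \<in> \<rat>" "z \<in> \<rat>"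
      using hu unfolding Sth_def by blast
    define A where "A = x" define B where "B = y * t" define C where "C = z * t^2"
    define D where "D = x^3 + N*y^3 + N^2*z^3 - 3*N*x*y*z"
    define P where "P = A^2 + B^2 + C^2 - A*B - B*C - C*A"
    have DP: "D = u * P" unfolding D_def P_def A_def B_def C_def using u(1) t3 by algebra
    have Pe: "P = (x^2 - N*y*z) + (N*z^2 - x*y) * t + (y^2 - x*z) * t^2"
    proof -
      have "P - ((x^2 - N*y*z) + (N*z^2 - x*y) * t + (y^2 - x*z) * t^2) = (t^3 - N) * (z^2*t - y*z)"
        unfolding P_def A_def B_def C_def by (simp add: algebra_simps power2_eq_square power3_eq_cube)
      thus ?thesis using t3 by simp
    qed
    have "D \<noteq> 0"
    proof
      assume "D = 0"
      hence "P = 0" using DP hn by simp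
      hence "(A - B)^2 + (B - C)^2 + (C - A)^2 = 0" unfolding P_def by (simp add: algebra_simps power2_eq_square)
      hence "A = B \<and> B = C"
        by (smt (verit) sum_power2_eq_zero_iff zero_le_power2)
      hence "u = 3 * x" "x = y * t" using u(1) unfolding A_def B_def C_def by auto
      hence "y \<noteq> 0" "x \<noteq> 0" using hn by auto
      hence "t = x / y" using \<open>x = y * t\<close> by (simp add: field_simps)
      hence "t \<in> \<rat>" using u by simp
      thus False using tq by blast
    qed
    hence "inverse u = P / D" using DP hn by (simp add: field_simps)
    also have "\<dots> = (x^2 - N*y*z)/D + ((N*z^2 - x*y)/D) * t + ((y^2 - x*z)/D) * t^2"
      unfolding Pe by (simp add: add_divide_distrib diff_divide_distrib algebra_simps)
    finally show ?thesis unfolding D_def by (simp only:) (intro Sth_I, use u N in simp_all)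
  qed
  show ?thesis unfolding real_subfield_def using z o ops inv by blast
qed

lemma QA_mem: "a \<in> Q_adjoin a" unfolding Q_adjoin_def by blast

lemma QA_least: "real_subfield K \<Longrightarrow> a \<in> K \<Longrightarrow> Q_adjoin a \<subseteq> K"
  unfolding Q_adjoin_def by blast

lemma Rats_subfield: "real_subfield \<rat>"
  unfolding real_subfield_def by auto

lemma t_in_Sth: "t \<in> Sth t"
  unfolding Sth_def by (rule CollectI, rule exI[of _ 0], rule exI[of _ 1], rule exI[of _ 0]) simp

lemma cube_elem:
  assumes t3: "t ^ 3 = N" and nc: "\<not> cub N" and N: "N \<in> \<rat>"
    and p: "p \<in> Sth t" and p3: "p ^ 3 \<in> \<rat>"
  shows "p \<in> \<rat> \<or> cub (p^3 / N) \<or> cub (p^3 / N^2)"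
proof -
  have N0: "N \<noteq> 0" using nc cub_pow3[of 0] by auto
  obtain x y z where u: "p = x + y * t + z * t^2" "x \<in> \<rat>" "y \<in> \<rat>" "z \<in> \<rat>"
    using p unfolding Sth_def by blast
  define c0 where "c0 = x^3 + N*y^3 + N^2*z^3 + 6*N*x*y*z"
  define c1 where "c1 = 3*(x^2*y + N*x*z^2 + N*y^2*z)"
  define c2 where "c2 = 3*(x^2*z + x*y^2 + N*y*z^2)"
  have "p^3 = c0 + c1 * t + c2 * t^2" unfolding c0_def c1_def c2_def u(1) t3[symmetric] by algebra
  hence "(c0 - p^3) + c1 * t + c2 * t^2 = 0" by simp
  moreover have "c0 - p^3 \<in> \<rat>" "c1 \<in> \<rat>" "c2 \<in> \<rat>" unfolding c0_def c1_def c2_def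
    using u N p3 by simp_all
  ultimately have "c1 = 0" "c2 = 0" using lin_indep[OF t3 nc _ _ _ N] by blast+
  hence E1: "x^2*y + N*x*z^2 + N*y^2*z = 0" and E2: "x^2*z + x*y^2 + N*y*z^2 = 0"
    unfolding c1_def c2_def by simp_all
  have two: "(y = 0 \<and> z = 0) \<or> (x = 0 \<and> z = 0) \<or> (x = 0 \<and> y = 0)"
  proof (cases "x = 0 \<or> y = 0 \<or> z = 0")
    case True
    then show ?thesis using E1 N0 by auto
  next
    case False
    have "x * (N * z^3 - y^3) = z * (x^2*y + N*x*z^2 + N*y^2*z) - y * (x^2*z + x*y^2 + N*y*z^2)"
      by (simp add: algebra_simps power2_eq_square power3_eq_cube)
    hence "N * z^3 = y^3" using E1 E2 False by simp
    hence "N = (y/z)^3" using False by (simp add: field_simps)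
    hence "cub N" using u cub_pow3 by simp
    thus ?thesis using nc by blast
  qed
  moreover
  { assume "y = 0 \<and> z = 0" hence "p \<in> \<rat>" using u by simp }
  moreover
  { assume "x = 0 \<and> z = 0" hence "p^3 / N = y^3" using u t3 N0 by (simp add: power_mult_distrib)
    hence "cub (p^3/N)" using u cub_pow3 by simp }
  moreover
  { assume xy: "x = 0 \<and> y = 0"
    have "t^6 = N^2" using t3 by (metis power_mult mult.commute num_double numeral_times_numeral)
    hence "p^3 / N^2 = z^3" using xy u N0
      by (simp add: power_mult_distrib flip: power_mult)
    hence "cub (p^3/N^2)" using u cub_pow3 by simp }
  ultimately show ?thesis by blast
qed

lemma per_lambda:
  assumes t3: "t ^ 3 = M" and nc: "\<not> cub M" and M: "M \<in> \<rat>" and l: "l \<in> \<rat>"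
    and eq: "Q_adjoin t = Q_adjoin (root 3 l)"
  shows "\<exists>e\<in>{1,2::nat}. cub (l / M ^ e)"
proof -
  define p where "p = root 3 l"
  have p3: "p ^ 3 = l" unfolding p_def by (simp add: odd_real_root_pow)
  have "p \<in> Sth t" using QA_mem[of p] eq QA_least[OF Sth_sub[OF t3 nc M] t_in_Sth] unfolding p_def by auto
  from cube_elem[OF t3 nc M this] p3 l
  have "p \<in> \<rat> \<or> cub (l / M) \<or> cub (l / M^2)" by simp
  moreover have "p \<notin> \<rat>"
  proof
    assume "p \<in> \<rat>"
    hence "Q_adjoin p \<subseteq> \<rat>" using QA_least Rats_subfield by blast
    hence "t \<in> \<rat>" using eq QA_mem[of t] unfolding p_def by auto
    thus False using irr_t t3 nc by blast
  qed
  ultimately show ?thesis by auto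
qed

lemma cub_one: "cub 1" using cub_pow3[of 1] by simp

lemma combo:
  fixes a b c :: real
  assumes a: "a > 0" "a \<in> \<rat>" and b: "b > 0" "b \<in> \<rat>" and c: "c > 0" "c \<in> \<rat>"
    and nc: "\<not> cub (a*b*c)"
    and h1: "e1 \<in> {1,2}" "cub ((a/b) / (a*b*c)^e1)"
    and h2: "e2 \<in> {1,2}" "cub ((b/c) / (a*b*c)^e2)"
    and h3: "e3 \<in> {1,2}" "cub ((c/a) / (a*b*c)^e3)"
  shows False
proof -
  define M where "M = a*b*c"
  have M0: "M > 0" unfolding M_def using a b c by simp
  have MQ: "M \<in> \<rat>" unfolding M_def using a b c by simp
  have cM3: "cub (M^3)" using cub_pow3[OF MQ] .
  have sq: "cub M" if "cub (M^2)"
  proof -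
    have "M = M^3 / M^2" using M0 by (simp add: power2_eq_square power3_eq_cube)
    thus ?thesis using cub_div[OF cM3 that] by simp
  qed
  have X: "cub (1 / M^(e1+e2+e3))"
  proof -
    have "(a/b) / M^e1 * ((b/c) / M^e2) * ((c/a) / M^e3) = 1 / M^(e1+e2+e3)"
      using a b c by (simp add: power_add field_simps)
    thus ?thesis using cub_mult[OF cub_mult[OF h1(2) h2(2)] h3(2)] unfolding M_def by simp
  qed
  have h1': "cub ((a/b) / M^e1)" and h2': "cub ((b/c) / M^e2)" and h3': "cub ((c/a) / M^e3)"
    using h1 h2 h3 unfolding M_def by auto
  have Y: "cub (M^(e1+e2+e3))" using cub_div[OF cub_one X] by simp
  consider "e1 = 1" "e2 = 1" "e3 = 1" | "e1 = 2" "e2 = 2" "e3 = 2" | "e1+e2+e3 = 4" | "e1+e2+e3 = 5"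
    using h1(1) h2(1) h3(1) by auto
  then have "cub M"
  proof cases
    case 1
    have "M = a^3 * ((c/a) / M) / ((a/b) / M)" using a b c M0 unfolding M_def
      by (simp add: field_simps power3_eq_cube)
    moreover have "cub (a^3 * ((c/a) / M) / ((a/b) / M))"
      using cub_div[OF cub_mult[OF cub_pow3[OF a(2)] h3'] h1'] 1 by simp
    ultimately show ?thesis by metis
  next
    case 2
    have "M^2 = (a*c)^3 * ((b/c) / M^2) / ((a/b) / M^2)" using a b c M0 unfolding M_def
      by (simp add: field_simps power3_eq_cube power2_eq_square)
    moreover have "cub ((a*c)^3 * ((b/c) / M^2) / ((a/b) / M^2))"
      using cub_div[OF cub_mult[OF cub_pow3[of "a*c"] h2'] h1'] 2 a c by simp
    ultimately have "cub (M^2)" by metis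
    thus ?thesis using sq by blast
  next
    case 3
    have "M = M^4 / M^3" using M0 by (simp add: power_eq_if)
    thus ?thesis using cub_div[OF Y cM3] 3 by simp
  next
    case 4
    have "M^2 = M^5 / M^3" using M0 by (simp add: power_eq_if)
    hence "cub (M^2)" using cub_div[OF Y cM3] 4 by simp
    thus ?thesis using sq by blast
  qed
  thus False using nc unfolding M_def by simp
qed

theorem lemma4p5:
  fixes a b c :: int
  assumes "a > 0" and "b > 0" and "c > 0"
    and "\<not> (\<exists>n::int. a * b * c = n ^ 3)"
  shows "\<exists>l \<in> {real_of_int a / real_of_int b, real_of_int b / real_of_int c,
                    real_of_int c / real_of_int a}.
           Q_adjoin (root 3 (real_of_int (a * b * c))) \<noteq> Q_adjoin (root 3 l)"
proof (rule ccontr)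
  assume H: "\<not> ?thesis"
  define M where "M = real_of_int (a*b*c)"
  define t where "t = root 3 M"
  have t3: "t ^ 3 = M" unfolding t_def by (simp add: odd_real_root_pow)
  have nc: "\<not> cub M" using rat_cube_int assms(4) unfolding M_def by blast
  have MQ: "M \<in> \<rat>" unfolding M_def by simp
  have eqs: "Q_adjoin t = Q_adjoin (root 3 (real_of_int a / real_of_int b))"
            "Q_adjoin t = Q_adjoin (root 3 (real_of_int b / real_of_int c))"
            "Q_adjoin t = Q_adjoin (root 3 (real_of_int c / real_of_int a))"
    using H unfolding t_def M_def by auto
  obtain e1 where e1: "e1 \<in> {1,2}" "cub ((real_of_int a / real_of_int b) / M^e1)"
    using per_lambda[OF t3 nc MQ _ eqs(1)] Rats_divide[OF Rats_of_int Rats_of_int, of a b] by blast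
  obtain e2 where e2: "e2 \<in> {1,2}" "cub ((real_of_int b / real_of_int c) / M^e2)"
    using per_lambda[OF t3 nc MQ _ eqs(2)] Rats_divide[OF Rats_of_int Rats_of_int, of b c] by blast
  obtain e3 where e3: "e3 \<in> {1,2}" "cub ((real_of_int c / real_of_int a) / M^e3)"
    using per_lambda[OF t3 nc MQ _ eqs(3)] Rats_divide[OF Rats_of_int Rats_of_int, of c a] by blast
  have Mabc: "M = real_of_int a * real_of_int b * real_of_int c" unfolding M_def by simp
  show False
    using combo[of "real_of_int a" "real_of_int b" "real_of_int c" e1 e2 e3] e1 e2 e3 nc assms(1-3)
    unfolding Mabc by simp
qed

end
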